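(* A general ring $I$ is strongly $\pi$-regular if and only if $I$ is quasipolar and $QN(I)\subseteq\mathrm{Nil}(I)$.
   Context: A general ring is an associative ring not necessarily having an identity; $\mathrm{Nil}(I)$ is the set of nilpotent elements of $I$. For $p,q\in I$, $p*q=p+q-pq$; $Q(I)=\{q\in I\mid p*q=0=q*p \text{ for some } p\in I\}$; $\mathrm{comm}(a)=\{x\in I\mid xa=ax\}$, $\mathrm{comm}^2(a)=\{x\in I\mid xy=yx\text{ for all }y\in\mathrm{comm}(a)\}$; $QN(I)=\{q\in I\mid qx\in Q(I)\text{ for every }x\in\mathrm{comm}(q)\}$. An element $a\in I$ is quasipolar in $I$ if there is an idempotent $p=p^2\in\mathrm{comm}^2(a)$ with $a+p\in Q(I)$ and $a-ap\in QN(I)$; $I$ is quasipolar if every element is. An element $a$ is strongly $\pi$-regular if there exist $n\in\mathbb{N}$ and $x\in I$ with $xa=ax$ and $a^n=a^{n+1}x$; $I$ is strongly $\pi$-regular if every element is. *)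

theory Defs
  imports Main
begin

(* A general ring (associative, not necessarily unital) is modelled by the
   type class ring; the ring I is the whole carrier UNIV of the type. *)

text \<open>Positive powers in a ring without identity: gpow a n = a^n for n >= 1
  (the value at n = 0 is a dummy and is never used).\<close>
fun gpow :: "'a::ring \<Rightarrow> nat \<Rightarrow> 'a" where
  "gpow a 0 = 0"
| "gpow a (Suc 0) = a"
| "gpow a (Suc (Suc n)) = a * gpow a (Suc n)"

definition nil_set :: "'a::ring set" where
  "nil_set = {a. \<exists>n\<ge>1. gpow a n = 0}"

definition circ :: "'a::ring \<Rightarrow> 'a \<Rightarrow> 'a" where
  "circ p q = p + q - p * q"

definition Qset :: "'a::ring set" where
  "Qset = {q. \<exists>p. circ p q = 0 \<and> circ q p = 0}"

definition comm :: "'a::ring \<Rightarrow> 'a set" where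
  "comm a = {x. x * a = a * x}"

definition comm2 :: "'a::ring \<Rightarrow> 'a set" where
  "comm2 a = {x. \<forall>y\<in>comm a. x * y = y * x}"

definition QN :: "'a::ring set" where
  "QN = {q. \<forall>x\<in>comm q. q * x \<in> Qset}"

definition quasipolar :: "'a::ring \<Rightarrow> bool" where
  "quasipolar a \<longleftrightarrow> (\<exists>p. p * p = p \<and> p \<in> comm2 a \<and> a + p \<in> Qset \<and> a - a * p \<in> QN)"

definition strongly_pi_regular :: "'a::ring \<Rightarrow> bool" where
  "strongly_pi_regular a \<longleftrightarrow>
     (\<exists>n\<ge>1. \<exists>x. x * a = a * x \<and> gpow a n = gpow a (Suc n) * x)"

end

theory Submission
  imports Defs
begin

lemma gpow_Suc: "n \<ge> 1 \<Longrightarrow> gpow a (Suc n) = a * gpow a n"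
  by (cases n) auto

lemma gpow_Suc': "n \<ge> 1 \<Longrightarrow> gpow a (Suc n) = gpow a n * a"
proof (induction n)
  case 0 then show ?case by simp
next
  case (Suc k)
  show ?case
  proof (cases "k = 0")
    case True then show ?thesis by simp
  next
    case False
    then have "gpow a (Suc k) = gpow a k * a" using Suc by simp
    have "gpow a (Suc (Suc k)) = a * gpow a (Suc k)" by simp
    also have "\<dots> = (a * gpow a k) * a" using \<open>gpow a (Suc k) = gpow a k * a\<close> by (simp add: mult.assoc)
    also have "\<dots> = gpow a (Suc k) * a" using gpow_Suc[of k a] False by simp
    finally show ?thesis .
  qed
qed

lemma gpow_comm: "y * a = a * y \<Longrightarrow> y * gpow a n = gpow a n * y"
proof (induction a n rule: gpow.induct)
  case (3 a n)
  then have "y * gpow a (Suc n) = gpow a (Suc n) * y" by simp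
  then have "y * (a * gpow a (Suc n)) = a * (gpow a (Suc n) * y)"
    using 3(2) by (metis mult.assoc)
  then show ?case by (simp add: mult.assoc)
qed auto

lemma gpow_mult: "b * a = a * b \<Longrightarrow> gpow (a * b) n = gpow a n * gpow b n"
proof (induction "a*b" n rule: gpow.induct)
  case (3 n)
  have c: "b * gpow a (Suc n) = gpow a (Suc n) * b" using gpow_comm 3(2) by metis
  have "gpow (a*b) (Suc (Suc n)) = a * b * (gpow a (Suc n) * gpow b (Suc n))"
    using 3 by simp
  also have "\<dots> = a * (b * gpow a (Suc n)) * gpow b (Suc n)" by (simp add: mult.assoc)
  also have "\<dots> = a * (gpow a (Suc n) * b) * gpow b (Suc n)" using c by simp
  also have "\<dots> = gpow a (Suc (Suc n)) * gpow b (Suc (Suc n))" by (simp add: mult.assoc)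
  finally show ?case .
qed auto

fun geo :: "'a::ring \<Rightarrow> nat \<Rightarrow> 'a" where
  "geo z 0 = 0"
| "geo z (Suc n) = geo z n + gpow z (Suc n)"

lemma geo_left: "z * geo z n = geo z (Suc n) - z"
proof (induction n)
  case 0 then show ?case by simp
next
  case (Suc n)
  have "z * geo z (Suc n) = z * geo z n + z * gpow z (Suc n)" by (simp add: distrib_left)
  also have "\<dots> = geo z (Suc n) - z + gpow z (Suc (Suc n))" using Suc by simp
  finally show ?case by simp
qed

lemma geo_right: "geo z n * z = geo z (Suc n) - z"
proof (induction n)
  case 0 then show ?case by simp
next
  case (Suc n)
  have "geo z (Suc n) * z = geo z n * z + gpow z (Suc n) * z" by (simp add: distrib_right)
  also have "\<dots> = geo z (Suc n) - z + gpow z (Suc (Suc n))"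
    using Suc gpow_Suc'[of "Suc n" z] by simp
  finally show ?case by simp
qed

lemma nil_Q: assumes "m \<ge> 1" "gpow z m = 0" shows "z \<in> Qset"
proof -
  obtain j where j: "m = Suc j" using assms(1) by (cases m) auto
  have "geo z (Suc j) - geo z j = 0" using assms(2) j by simp
  then have "circ (- geo z j) z = 0 \<and> circ z (- geo z j) = 0"
    unfolding circ_def using geo_left[of z j] geo_right[of z j] by (simp add: algebra_simps)
  then show ?thesis unfolding Qset_def by blast
qed

lemma circ_assoc: "circ (circ x y) z = circ x (circ y (z::'a::ring))"
  by (simp add: circ_def algebra_simps)

lemma circ_0: "circ 0 x = x" "circ x 0 = x"
  by (simp_all add: circ_def)

lemma Q_circ: assumes "x \<in> Qset" "y \<in> Qset" shows "circ x y \<in> Qset"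
proof -
  obtain x' where x: "circ x' x = 0" "circ x x' = 0" using assms(1) unfolding Qset_def by blast
  obtain y' where y: "circ y' y = 0" "circ y y' = 0" using assms(2) unfolding Qset_def by blast
  have "circ (circ x y) (circ y' x') = 0"
    by (metis circ_assoc circ_0 x y)
  moreover have "circ (circ y' x') (circ x y) = 0"
    by (metis circ_assoc circ_0 x y)
  ultimately show ?thesis unfolding Qset_def by blast
qed

lemma Npow:
  fixes a p :: "'a::ring"
  assumes pp: "p*p = p" and pa: "p*a = a*p"
  shows "n \<ge> 1 \<Longrightarrow> gpow (a - a*p) n = gpow a n - gpow a n * p"
proof (induction n)
  case 0 then show ?case by simp
next
  case (Suc k)
  show ?case
  proof (cases "k = 0")
    case True then show ?thesis by simp
  next
    case False
    then have IH: "gpow (a - a*p) k = gpow a k - gpow a k * p" using Suc by simp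
    have c: "p * gpow a k = gpow a k * p" using gpow_comm pa by metis
    have "gpow (a - a*p) (Suc k) = (a - a*p) * (gpow a k - gpow a k * p)"
      using gpow_Suc[of k "a - a*p"] False IH by simp
    also have "\<dots> = a * gpow a k - a * gpow a k * p - a * (p * gpow a k) + a * (p * gpow a k) * p"
      by (simp add: algebra_simps)
    also have "\<dots> = a * gpow a k - a * gpow a k * p"
      using c pp by (simp add: mult.assoc)
    also have "\<dots> = gpow a (Suc k) - gpow a (Suc k) * p" using gpow_Suc[of k a] False by simp
    finally show ?thesis .
  qed
qed

lemma circ0_eq: "circ s r = 0 \<Longrightarrow> s * r = s + r"
  unfolding circ_def by (metis add_diff_cancel_left' diff_add_cancel diff_diff_eq2 diff_zero)

lemma comm_qinv:
  fixes r s y :: "'a::ring"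
  assumes h1: "circ r s = 0" and h2: "circ s r = 0" and ys: "s*y = y*s"
  shows "r*y = y*r"
proof -
  have rs: "r*s = r + s" using circ0_eq h1 by blast
  have sr: "s*r = s + r" using circ0_eq h2 by blast
  have "y - r*y = y - r*y + (y - r*y)*(s*r - s - r)" using sr by simp
  also have "\<dots> = y - y*r + (r*s - r - s)*(y - y*r)"
  proof -
    have "r*(y*s) = r*(s*y)" "y*(s*r) = s*(y*r)" "r*(y*(s*r)) = r*(s*(y*r))"
      using ys by (metis mult.assoc)+
    then show ?thesis using ys by (simp add: algebra_simps)
  qed
  also have "\<dots> = y - y*r" using rs by simp
  finally show ?thesis by simp
qed

lemma fix_pow: "b*u = b \<Longrightarrow> m \<ge> 1 \<Longrightarrow> b * gpow u m = b"
proof (induction m)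
  case 0 then show ?case by simp
next
  case (Suc k)
  show ?case
  proof (cases "k = 0")
    case True then show ?thesis using Suc by simp
  next
    case False
    then have "b * gpow u (Suc k) = (b*u) * gpow u k" using gpow_Suc[of k u] by (simp add: mult.assoc)
    then show ?thesis using Suc False by simp
  qed
qed

lemma QN_nil:
  fixes q :: "'a::ring"
  assumes H: "\<forall>a::'a. strongly_pi_regular a" and q: "q \<in> QN"
  shows "q \<in> nil_set"
proof -
  obtain n x where n: "n\<ge>1" "x*q = q*x" "gpow q n = gpow q (Suc n) * x"
    using H unfolding strongly_pi_regular_def by blast
  have "q*x \<in> Qset" using q n(2) unfolding QN_def comm_def by auto
  then obtain r where r: "circ (q*x) r = 0" unfolding Qset_def by blast
  have bz: "gpow q n * (q*x) = gpow q n"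
    using n gpow_Suc'[of n q] by (simp add: mult.assoc)
  have "gpow q n * circ (q*x) r = gpow q n * (q*x) + gpow q n * r - (gpow q n * (q*x)) * r"
    by (simp add: circ_def algebra_simps)
  also have "\<dots> = gpow q n" using bz by simp
  finally have "gpow q n = 0" using r by simp
  then show ?thesis unfolding nil_set_def using n(1) by auto
qed

lemma spr_qp:
  fixes a :: "'a::ring"
  assumes "strongly_pi_regular a"
  shows "quasipolar a"
proof -
  obtain n x where n: "n\<ge>1" and xa: "x*a = a*x" and bx: "gpow a n = gpow a (Suc n) * x"
    using assms unfolding strongly_pi_regular_def by blast
  define b where "b = gpow a n"
  define u where "u = a*x"
  define c where "c = gpow x n"
  define p where "p = gpow u n"
  have f1: "b*u = b" using bx gpow_Suc'[of n a] n unfolding b_def u_def by (simp add: mult.assoc)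
  have f2: "p = b*c" unfolding p_def b_def c_def u_def using gpow_mult xa by metis
  have xb: "x*b = b*x" unfolding b_def using gpow_comm xa by metis
  have cb: "c*b = b*c" unfolding c_def using gpow_comm xb by metis
  have f3: "b*p = b" unfolding p_def using fix_pow[OF f1 n] .
  have pb: "p*b = b" using f2 cb f3 by (metis mult.assoc)
  have pp: "p*p = p" using f2 cb f3 by (metis mult.assoc)
  have c2: "p \<in> comm2 a" unfolding comm2_def comm_def
  proof (intro CollectI ballI)
    fix y assume "y \<in> {x. x * a = a * x}"
    then have ya: "y*a = a*y" by simp
    have yb: "y*b = b*y" unfolding b_def using gpow_comm ya by metis
    have "p*y = c*(y*b)" using f2 cb yb by (metis mult.assoc)
    also have "\<dots> = c*y*(b*b*c)" using f3 f2 by (simp add: mult.assoc)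
    also have "\<dots> = (c*b)*y*(b*c)" using yb by (metis mult.assoc)
    also have "\<dots> = p*y*p" using f2 cb by simp
    finally have 1: "p*y = p*y*p" .
    have "y*p = b*y*c" using f2 yb by (metis mult.assoc)
    also have "\<dots> = (c*b*b)*y*c" using pb f2 cb by simp
    also have "\<dots> = (c*b)*y*(b*c)" using yb by (metis mult.assoc)
    also have "\<dots> = p*y*p" using f2 cb by simp
    finally show "p*y = y*p" using 1 by simp
  qed
  have pa: "p*a = a*p" using c2 unfolding comm2_def comm_def by simp
  have xu: "x*u = u*x" unfolding u_def using xa by (metis mult.assoc)
  have xp: "x*p = p*x" unfolding p_def using gpow_comm xu by metis
  have pu: "p*u = p" using f2 cb f1 by (metis mult.assoc)
  define d where "d = p*x"
  have ad: "a*d = p" unfolding d_def using pa pu u_def by (metis mult.assoc)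
  have da: "d*a = p" unfolding d_def using xa pu u_def by (metis mult.assoc)
  have pd: "p*d = d" unfolding d_def using pp by (metis mult.assoc)
  have dp: "d*p = d" unfolding d_def using pp xp by (metis mult.assoc)
  have pap: "p*(a*p) = a*p" using pa pp by (metis mult.assoc)
  have dap: "d*(a*p) = p" using da pp by (metis mult.assoc)
  have apd: "a*(p*d) = p" using pd ad by simp
  have s1Q: "a*p + p \<in> Qset"
  proof -
    have "circ (p+d) (a*p+p) = 0" using pap dap pp dp by (simp add: circ_def algebra_simps)
    moreover have "circ (a*p+p) (p+d) = 0" using apd pp pd by (simp add: circ_def algebra_simps)
    ultimately show ?thesis unfolding Qset_def by blast
  qed
  define N where "N = a - a*p"
  have Nn: "gpow N n = 0" unfolding N_def using Npow[OF pp pa n] f3 b_def by simp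
  have NQ: "N \<in> Qset" using nil_Q[OF n Nn] .
  have apa: "a*(p*(a*p)) = a*(a*p)" using pap by simp
  have s1N: "(a*p+p)*(a - a*p) = 0" using pa pap apa pp by (simp add: algebra_simps)
  have "circ (a*p+p) N = a + p" unfolding circ_def N_def using s1N by simp
  then have apQ: "a + p \<in> Qset" using Q_circ[OF s1Q NQ] by simp
  have NQN: "a - a*p \<in> QN" unfolding QN_def comm_def
  proof (intro CollectI ballI)
    fix y assume "y \<in> {x. x * (a - a*p) = (a - a*p) * x}"
    then have "y*N = N*y" unfolding N_def by simp
    then have "gpow (N*y) n = 0" using gpow_mult Nn by (metis mult_zero_left)
    then show "(a - a*p) * y \<in> Qset" using nil_Q[OF n] N_def by simp
  qed
  show ?thesis unfolding quasipolar_def using pp c2 apQ NQN by blast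
qed

lemma qp_spr:
  fixes a :: "'a::ring"
  assumes qp: "quasipolar a" and QNn: "(QN::'a set) \<subseteq> nil_set"
  shows "strongly_pi_regular a"
proof -
  obtain p where pp: "p*p = p" and c2: "p \<in> comm2 a" and sQ: "a + p \<in> Qset"
    and NQN: "a - a*p \<in> QN"
    using qp unfolding quasipolar_def by blast
  obtain m where m: "m \<ge> 1" and Nm: "gpow (a - a*p) m = 0"
    using NQN QNn unfolding nil_set_def by blast
  have pa: "p*a = a*p" using c2 unfolding comm2_def comm_def by simp
  obtain r where r1: "circ r (a+p) = 0" and r2: "circ (a+p) r = 0"
    using sQ unfolding Qset_def by blast
  have ra: "r*a = a*r" using comm_qinv[OF r1 r2] pa by (simp add: algebra_simps)
  have rp: "r*p = p*r" using comm_qinv[OF r1 r2] pa pp by (simp add: algebra_simps)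
  have e: "(a+p)*r = a + p + r" using circ0_eq[OF r2] by simp
  have "(a+p)*r*p = (a+p+r)*p" using e by simp
  then have "a*(r*p) + p*(r*p) = a*p + p + r*p" using pp by (simp add: algebra_simps)
  moreover have "p*(r*p) = r*p" using rp pp by (metis mult.assoc)
  ultimately have arp: "a*(r*p) = a*p + p" by simp
  define x where "x = r*p - p"
  have ax: "a*x = p" unfolding x_def using arp by (simp add: algebra_simps)
  have xa: "x*a = a*x" unfolding x_def using ra pa arp
    by (simp add: algebra_simps) (metis mult.assoc)
  have "gpow a m - gpow a m * p = 0" using Npow[OF pp pa m] Nm by simp
  then have amp: "gpow a m * p = gpow a m" by simp
  have "gpow a (Suc m) * x = gpow a m * (a*x)" using gpow_Suc'[OF m, of a] by (simp add: mult.assoc)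
  also have "\<dots> = gpow a m" using ax amp by simp
  finally show ?thesis unfolding strongly_pi_regular_def using m xa by metis
qed

theorem proposition2p21:
  shows "(\<forall>a::'a::ring. strongly_pi_regular a) \<longleftrightarrow>
         ((\<forall>a::'a. quasipolar a) \<and> (QN :: 'a set) \<subseteq> nil_set)"
  using QN_nil spr_qp qp_spr by blast

end
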